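(* Assume the setting of the cascaded and direct models with $K\ge 2$, $d_k=2^{k-1}d_1$, and $\sigma_k=2^{-(k-1)}\sigma$, and let $L_A$ and $L_1,\dots,L_K$ be the transport costs defined there. Assume the inference-cost model in which a flow on $\mathbb{R}^d$ with transport cost $L$ has expected inference time $\alpha\,N\,d$, where $N=C\,L$ is its number of function evaluations and $\alpha,C>0$ are fixed constants. Let $$T_A=\alpha C\,L_A\,d_K,\qquad T_B=\sum_{k=1}^K\alpha C\,L_k\,d_k .$$ Then $T_A>T_B$; equivalently, $$\sum_{k=1}^K d_k L_k<d_K L_A .$$
   Context: $|\cdot|$ is the Euclidean norm. For $2\le k\le K$, fix a partition of $\{1,\dots,d_k\}$ into $d_{k-1}$ blocks of size $2$. The operator $D_k:\mathbb{R}^{d_k}\to\mathbb{R}^{d_{k-1}}$ averages the entries within each block. The operator $U_k:\mathbb{R}^{d_{k-1}}\to\mathbb{R}^{d_k}$ copies entry $j$ to every coordinate of block $j$. Let $x$ be a random vector in $\mathbb{R}^{d_K}$ with finite second moment, and set $x^{(K)}=x$ and $x^{(k-1)}=D_k x^{(k)}$. Direct model: $L_A=\mathbb{E}|x-x_0|^2$, where $x_0\sim\mathcal N(0,\sigma^2I_{d_K})$ is independent of $x$. Cascaded model: - $L_1=\mathbb{E}|x^{(1)}-x_0^{(1)}|^2$, where $x_0^{(1)}\sim\mathcal N(0,\sigma^2 I_{d_1})$ is independent of $x$. - For $k\ge2$, $L_k=\mathbb{E}|x^{(k)}-x_0^{(k)}|^2$, where $x_0^{(k)}=U_k(D_k x^{(k)})+\sigma_k\zeta_k$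 and $\zeta_k\sim\mathcal N(0,I_{d_k})$ is independent of $x$. *)

theory Defs
  imports "HOL-Probability.Probability"
begin

text \<open>Vectors in R^n are represented as functions nat => real, only the
coordinates 0..n-1 being relevant.\<close>

definition sqnorm :: "nat \<Rightarrow> (nat \<Rightarrow> real) \<Rightarrow> real" where
  "sqnorm n v = (\<Sum>i<n. (v i)^2)"

definition gauss :: "nat \<Rightarrow> real \<Rightarrow> (nat \<Rightarrow> real) measure" where
  "gauss n s = PiM {..<n} (\<lambda>_. density lborel (normal_density 0 s))"

text \<open>A partition of {0..<dk} into dk1 blocks of size 2, given by the block map
b : {0..<dk} -> {0..<dk1} (b i = index of the block containing i).\<close>
definition pair_partition :: "(nat \<Rightarrow> nat) \<Rightarrow> nat \<Rightarrow> nat \<Rightarrow> bool" where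
  "pair_partition b dk dk1 \<longleftrightarrow>
     (\<forall>i<dk. b i < dk1) \<and> (\<forall>j<dk1. card {i. i < dk \<and> b i = j} = 2)"

definition Dop :: "(nat \<Rightarrow> nat) \<Rightarrow> nat \<Rightarrow> (nat \<Rightarrow> real) \<Rightarrow> (nat \<Rightarrow> real)" where
  "Dop b dk y = (\<lambda>j. (\<Sum>i\<in>{i. i < dk \<and> b i = j}. y i) / 2)"

definition Uop :: "(nat \<Rightarrow> nat) \<Rightarrow> (nat \<Rightarrow> real) \<Rightarrow> (nat \<Rightarrow> real)" where
  "Uop b z = (\<lambda>i. z (b i))"

text \<open>down bs d K m y = x^(K-m) when x^(K) = y; bs k is the block map of level k,
d k the dimension of level k.\<close>
primrec down :: "(nat \<Rightarrow> nat \<Rightarrow> nat) \<Rightarrow> (nat \<Rightarrow> nat) \<Rightarrow> nat \<Rightarrow> nat \<Rightarrow> (nat \<Rightarrow> real) \<Rightarrow> (nat \<Rightarrow> real)" where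
  "down bs d K 0 y = y"
| "down bs d K (Suc m) y = Dop (bs (K - m)) (d (K - m)) (down bs d K m y)"

definition level :: "(nat \<Rightarrow> nat \<Rightarrow> nat) \<Rightarrow> (nat \<Rightarrow> nat) \<Rightarrow> nat \<Rightarrow> nat \<Rightarrow> (nat \<Rightarrow> real) \<Rightarrow> (nat \<Rightarrow> real)" where
  "level bs d K k y = down bs d K (K - k) y"

text \<open>Direct model cost L_A = E|x - x0|^2, x0 ~ N(0, sigma^2 I) independent of x
(expectation under the product law, written as an iterated integral).\<close>
definition LA :: "'a measure \<Rightarrow> ('a \<Rightarrow> nat \<Rightarrow> real) \<Rightarrow> nat \<Rightarrow> real \<Rightarrow> real" where
  "LA M X dK \<sigma> = (\<integral>\<omega>. (\<integral>z. sqnorm dK (\<lambda>i. X \<omega> i - z i) \<partial>gauss dK \<sigma>) \<partial>M)"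

definition L1 :: "'a measure \<Rightarrow> (nat \<Rightarrow> nat \<Rightarrow> nat) \<Rightarrow> (nat \<Rightarrow> nat) \<Rightarrow> nat \<Rightarrow>
    ('a \<Rightarrow> nat \<Rightarrow> real) \<Rightarrow> real \<Rightarrow> real" where
  "L1 M bs d K X \<sigma> =
     (\<integral>\<omega>. (\<integral>z. sqnorm (d 1) (\<lambda>i. level bs d K 1 (X \<omega>) i - z i) \<partial>gauss (d 1) \<sigma>) \<partial>M)"

text \<open>Cascaded model cost at level k >= 2: x0^(k) = U_k (D_k x^(k)) + sigma_k zeta_k,
zeta_k ~ N(0, I) independent of x.\<close>
definition Lk :: "'a measure \<Rightarrow> (nat \<Rightarrow> nat \<Rightarrow> nat) \<Rightarrow> (nat \<Rightarrow> nat) \<Rightarrow> nat \<Rightarrow>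
    ('a \<Rightarrow> nat \<Rightarrow> real) \<Rightarrow> real \<Rightarrow> nat \<Rightarrow> real" where
  "Lk M bs d K X \<sigma>k k =
     (\<integral>\<omega>. (\<integral>\<zeta>. sqnorm (d k)
        (\<lambda>i. level bs d K k (X \<omega>) i
              - (Uop (bs k) (Dop (bs k) (d k) (level bs d K k (X \<omega>))) i + \<sigma>k * \<zeta> i))
        \<partial>gauss (d k) 1) \<partial>M)"

definition Lcasc :: "'a measure \<Rightarrow> (nat \<Rightarrow> nat \<Rightarrow> nat) \<Rightarrow> (nat \<Rightarrow> nat) \<Rightarrow> nat \<Rightarrow>
    ('a \<Rightarrow> nat \<Rightarrow> real) \<Rightarrow> (nat \<Rightarrow> real) \<Rightarrow> real \<Rightarrow> nat \<Rightarrow> real" where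
  "Lcasc M bs d K X sig \<sigma> k =
     (if k = 1 then L1 M bs d K X \<sigma> else Lk M bs d K X (sig k) k)"

end

theory Submission
  imports Defs
begin

lemma norm1:
  fixes s c t :: real assumes s: "s > 0"
  shows "integrable (density lborel (normal_density 0 s)) (\<lambda>z. (c - t*z)^2)"
    and "(\<integral>z. (c - t*z)^2 \<partial>density lborel (normal_density 0 s)) = c^2 + t^2 * s^2"
proof -
  have m0: "has_bochner_integral lborel (\<lambda>x. normal_density 0 s x) 1"
    using normal_moment_even[OF s, of 0 0] by simp
  have m1: "has_bochner_integral lborel (\<lambda>x. normal_density 0 s x * x) 0"
    using normal_moment_odd[OF s, of 0 0] by simp
  have m2: "has_bochner_integral lborel (\<lambda>x. normal_density 0 s x * x^2) (s^2)"
    using normal_moment_even[OF s, of 0 1] by (simp add: power2_eq_square)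
  have e: "(\<lambda>x. normal_density 0 s x * (c - t*x)^2) =
     (\<lambda>x. c^2 * normal_density 0 s x + (-2*c*t) * (normal_density 0 s x * x) + t^2 * (normal_density 0 s x * x^2))"
    by (rule ext) (simp add: power2_eq_square algebra_simps)
  have h: "has_bochner_integral lborel (\<lambda>x. normal_density 0 s x * (c - t*x)^2) (c^2 + t^2 * s^2)"
    unfolding e
    using has_bochner_integral_add[OF has_bochner_integral_add[OF has_bochner_integral_mult_right[OF m0, of "c^2"] has_bochner_integral_mult_right[OF m1, of "-2*c*t"]] has_bochner_integral_mult_right[OF m2, of "t^2"]]
    by simp
  show "integrable (density lborel (normal_density 0 s)) (\<lambda>z. (c - t*z)^2)"
    using h by (subst integrable_density) (auto simp: has_bochner_integral_iff)
  show "(\<integral>z. (c - t*z)^2 \<partial>density lborel (normal_density 0 s)) = c^2 + t^2 * s^2"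
    using h by (subst integral_density) (auto simp: has_bochner_integral_iff)
qed

lemma gauss_int:
  fixes s t :: real and a :: "nat \<Rightarrow> real" assumes s: "s > 0"
  shows "(\<integral>z. sqnorm n (\<lambda>i. a i - t * z i) \<partial>gauss n s) = sqnorm n a + real n * t^2 * s^2"
proof -
  let ?N = "density lborel (normal_density 0 s)"
  have pN: "prob_space ?N" by (rule prob_space_normal_density) (rule s)
  have comp: "\<And>i. i < n \<Longrightarrow> distr (gauss n s) ?N (\<lambda>\<omega>. \<omega> i) = ?N"
    unfolding gauss_def by (rule distr_PiM_component) (rule pN, simp)
  have mc: "(\<lambda>\<omega>. \<omega> i) \<in> measurable (gauss n s) ?N" if "i < n" for i
    unfolding gauss_def by (rule measurable_component_singleton) (use that in simp)
  have fm: "(\<lambda>z. (a i - t * z)^2) \<in> borel_measurable ?N" for i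
    by (simp add: measurable_cong_sets[OF sets_density refl])
  have I: "integrable (gauss n s) (\<lambda>z. (a i - t * z i)^2)" if "i < n" for i
  proof -
    have "integrable (distr (gauss n s) ?N (\<lambda>\<omega>. \<omega> i)) (\<lambda>z. (a i - t * z)^2)"
      using comp[OF that] norm1(1)[OF s] by simp
    then show ?thesis
      by (subst (asm) integrable_distr_eq[OF mc[OF that] fm])
  qed
  have V: "(\<integral>z. (a i - t * z i)^2 \<partial>gauss n s) = (a i)^2 + t^2 * s^2" if "i < n" for i
  proof -
    have "(\<integral>z. (a i - t * z i)^2 \<partial>gauss n s) = (\<integral>z. (a i - t * z)^2 \<partial>distr (gauss n s) ?N (\<lambda>\<omega>. \<omega> i))"
      by (rule integral_distr[OF mc[OF that] fm, symmetric])
    also have "\<dots> = (a i)^2 + t^2 * s^2" using comp[OF that] norm1(2)[OF s] by simp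
    finally show ?thesis .
  qed
  have "(\<integral>z. sqnorm n (\<lambda>i. a i - t * z i) \<partial>gauss n s) = (\<Sum>i<n. \<integral>z. (a i - t * z i)^2 \<partial>gauss n s)"
    unfolding sqnorm_def by (rule Bochner_Integration.integral_sum) (use I in auto)
  also have "\<dots> = (\<Sum>i<n. (a i)^2 + t^2 * s^2)" by (rule sum.cong) (auto simp: V)
  finally show ?thesis by (simp add: sqnorm_def sum.distrib)
qed
lemma block_id:
  assumes pp: "pair_partition b dk dk1"
  shows "sqnorm dk (\<lambda>i. y i - Uop b (Dop b dk y) i) = sqnorm dk y - 2 * sqnorm dk1 (Dop b dk y)"
proof -
  let ?m = "Dop b dk y"
  let ?F = "\<lambda>j. {i. i \<in> {..<dk} \<and> b i = j}"
  have bl: "\<forall>i<dk. b i < dk1" and cd: "\<And>j. j < dk1 \<Longrightarrow> card {i. i < dk \<and> b i = j} = 2"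
    using pp unfolding pair_partition_def by auto
  have grp: "(\<Sum>i<dk. h i) = (\<Sum>j<dk1. \<Sum>i\<in>?F j. h i)" for h :: "nat \<Rightarrow> real"
    by (rule sum.group[symmetric]) (use bl in auto)
  have sy: "(\<Sum>i\<in>?F j. y i) = 2 * ?m j" for j
    by (simp add: Dop_def)
  have per: "(\<Sum>i\<in>?F j. (y i - Uop b ?m i)^2) = (\<Sum>i\<in>?F j. (y i)^2) - 2 * (?m j)^2" if j: "j < dk1" for j
  proof -
    have "(\<Sum>i\<in>?F j. (y i - Uop b ?m i)^2) = (\<Sum>i\<in>?F j. (y i)^2 - 2 * ?m j * y i + (?m j)^2)"
      by (rule sum.cong) (auto simp: Uop_def power2_eq_square algebra_simps)
    also have "\<dots> = (\<Sum>i\<in>?F j. (y i)^2) - 2 * ?m j * (\<Sum>i\<in>?F j. y i) + real (card (?F j)) * (?m j)^2"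
      by (simp add: sum.distrib sum_subtractf sum_distrib_left)
    also have "card (?F j) = 2" using cd[OF j] by simp
    finally show ?thesis by (simp only: sy) (simp add: power2_eq_square)
  qed
  have "sqnorm dk (\<lambda>i. y i - Uop b ?m i) = (\<Sum>j<dk1. \<Sum>i\<in>?F j. (y i - Uop b ?m i)^2)"
    unfolding sqnorm_def by (rule grp)
  also have "\<dots> = (\<Sum>j<dk1. (\<Sum>i\<in>?F j. (y i)^2) - 2 * (?m j)^2)"
    by (rule sum.cong[OF refl]) (rule per, simp)
  also have "\<dots> = (\<Sum>j<dk1. (\<Sum>i\<in>?F j. (y i)^2)) - 2 * sqnorm dk1 ?m"
    by (simp add: sum_subtractf sum_distrib_left sqnorm_def)
  also have "(\<Sum>j<dk1. (\<Sum>i\<in>?F j. (y i)^2)) = sqnorm dk y"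
    unfolding sqnorm_def by (rule grp[symmetric])
  finally show ?thesis .
qed

lemma arith_sum:
  fixes E l :: "nat \<Rightarrow> real" and D s :: real
  assumes l1: "l 1 = E 1 + D * s^2"
    and lk: "\<And>k. 2 \<le> k \<Longrightarrow> l k = E k - 2 * E (k - 1) + (2^(k-1) * D) * (s / 2^(k-1))^2"
    and n: "1 \<le> n"
  shows "(\<Sum>k=1..n. (2^(k-1) * D) * l k) = 2^(n-1) * D * E n - 3 * (\<Sum>k=1..<n. 2^(k-1) * D * E k) + real n * D^2 * s^2"
  using n
proof (induction n rule: nat_induct_at_least)
  case base
  then show ?case using l1 by (simp add: power2_eq_square algebra_simps)
next
  case (Suc n)
  obtain m where m: "n = Suc m" using Suc.hyps by (cases n) auto
  have e: "l (Suc n) = E (Suc n) - 2 * E n + (2^n * D) * (s / 2^n)^2"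
    using lk[of "Suc n"] Suc.hyps by simp
  have q: "2^n * D * ((2^n * D) * (s / 2^n)^2) = D^2 * s^2"
    by (simp add: power2_eq_square field_simps)
  have "(\<Sum>k=1..Suc n. (2^(k-1) * D) * l k) = (\<Sum>k=1..n. (2^(k-1) * D) * l k) + 2^n * D * l (Suc n)"
    by simp
  also have "\<dots> = 2^(n-1) * D * E n - 3 * (\<Sum>k=1..<n. 2^(k-1) * D * E k) + real n * D^2 * s^2
       + 2^n * D * (E (Suc n) - 2 * E n) + 2^n * D * ((2^n * D) * (s / 2^n)^2)"
    by (simp only: Suc.IH e distrib_left add.assoc)
  also have "\<dots> = 2^(n-1) * D * E n - 3 * (\<Sum>k=1..<n. 2^(k-1) * D * E k) + real n * D^2 * s^2
       + 2^n * D * (E (Suc n) - 2 * E n) + D^2 * s^2"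
    by (simp only: q)
  also have "\<dots> = 2^m * D * E n - 3 * (\<Sum>k=1..<n. 2^(k-1) * D * E k) + real n * D^2 * s^2
       + 2 * 2^m * D * (E (Suc n) - 2 * E n) + D^2 * s^2"
    by (simp add: m)
  also have "\<dots> = 2 * 2^m * D * E (Suc n) - 3 * ((\<Sum>k=1..<n. 2^(k-1) * D * E k) + 2^m * D * E n) + (real n + 1) * D^2 * s^2"
    by (simp add: algebra_simps)
  also have "(\<Sum>k=1..<n. 2^(k-1) * D * E k) + 2^m * D * E n = (\<Sum>k=1..<Suc n. 2^(k-1) * D * E k)"
    using Suc.hyps by (simp add: m)
  finally show ?case by (simp add: m)
qed

lemma arith_final:
  fixes E l :: "nat \<Rightarrow> real" and D s :: real
  assumes l1: "l 1 = E 1 + D * s^2"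
    and lk: "\<And>k. 2 \<le> k \<Longrightarrow> l k = E k - 2 * E (k - 1) + (2^(k-1) * D) * (s / 2^(k-1))^2"
    and K: "2 \<le> K" and D: "D > 0" and s: "s > 0" and E: "\<And>k. E k \<ge> 0"
  shows "(\<Sum>k=1..K. (2^(k-1) * D) * l k) < 2^(K-1) * D * (E K + 2^(K-1) * D * s^2)"
proof -
  have "(\<Sum>k=1..<K. 2^(k-1) * D * E k) \<ge> 0" using D E by (intro sum_nonneg) auto
  moreover have "real K * D^2 * s^2 < 2^(K-1) * D * (2^(K-1) * D * s^2)"
  proof -
    have "K - 1 < 2^(K-1)" by (rule less_exp)
    then have "K \<le> (2::nat)^(K-1)" using K by linarith
    then have a: "real K \<le> 2^(K-1)" by (metis of_nat_le_iff of_nat_numeral of_nat_power)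
    have "(2::real)^1 \<le> 2^(K-1)" using K by (intro power_increasing) auto
    then have b: "(2::real) \<le> 2^(K-1)" by simp
    have "2 * 2^(K-1) \<le> (2::real)^(K-1) * 2^(K-1)" using b by (intro mult_right_mono) auto
    moreover have "real K < 2 * 2^(K-1)"
    proof -
      have "(0::real) < 2^(K-1)" by simp
      then show ?thesis using a by linarith
    qed
    ultimately have "real K < 2^(K-1) * 2^(K-1)" by linarith
    moreover have "D^2 * s^2 > 0" using D s by simp
    ultimately have "real K * (D^2 * s^2) < (2^(K-1) * 2^(K-1)) * (D^2 * s^2)"
      by (intro mult_strict_right_mono) auto
    then show ?thesis by (simp add: power2_eq_square algebra_simps)
  qed
  ultimately show ?thesis
    using arith_sum[OF l1 lk, of K] K by (simp add: algebra_simps)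
qed

lemma down_meas:
  fixes X :: "'a \<Rightarrow> nat \<Rightarrow> real"
  assumes X: "\<And>i. i < d K \<Longrightarrow> (\<lambda>\<omega>. X \<omega> i) \<in> borel_measurable M"
    and dmono: "\<And>k. k \<le> K \<Longrightarrow> d k \<le> d K"
  shows "(m = 0 \<longrightarrow> i < d K) \<longrightarrow> (\<lambda>\<omega>. down bs d K m (X \<omega>) i) \<in> borel_measurable M"
proof (induction m arbitrary: i)
  case 0
  show ?case
  proof
    assume "0 = 0 \<longrightarrow> i < d K"
    then have "i < d K" by blast
    then have "(\<lambda>\<omega>. X \<omega> i) \<in> borel_measurable M" by (rule X)
    then show "(\<lambda>\<omega>. down bs d K 0 (X \<omega>) i) \<in> borel_measurable M" by (simp only: down.simps)
  qed
next
  case (Suc m)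
  have mj: "(\<lambda>\<omega>. down bs d K m (X \<omega>) j) \<in> borel_measurable M" if "j < d (K - m)" for j
  proof -
    have "d (K - m) \<le> d K" by (rule dmono) simp
    then have "m = 0 \<longrightarrow> j < d K" using that by linarith
    then show ?thesis by (rule mp[OF Suc.IH[of j]])
  qed
  have "(\<lambda>\<omega>. (\<Sum>j\<in>{j. j < d (K - m) \<and> bs (K - m) j = i}. down bs d K m (X \<omega>) j) / 2) \<in> borel_measurable M"
    by (rule borel_measurable_divide[OF borel_measurable_sum borel_measurable_const]) (rule mj, blast)
  then have mS: "(\<lambda>\<omega>. down bs d K (Suc m) (X \<omega>) i) \<in> borel_measurable M"
    by (simp only: down.simps Dop_def)
  show ?case
  proof
    show "(\<lambda>\<omega>. down bs d K (Suc m) (X \<omega>) i) \<in> borel_measurable M" by (fact mS)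
  qed
qed

lemma int_down:
  fixes q :: "nat \<Rightarrow> 'a \<Rightarrow> real"
  assumes meas: "\<And>k. k \<le> K \<Longrightarrow> q k \<in> borel_measurable M"
    and nn: "\<And>k \<omega>. q k \<omega> \<ge> 0"
    and step: "\<And>k \<omega>. 2 \<le> k \<Longrightarrow> k \<le> K \<Longrightarrow> q (k-1) \<omega> \<le> q k \<omega>"
    and top: "integrable M (q K)"
  shows "m \<le> K - 1 \<longrightarrow> integrable M (q (K - m))"
proof (induction m)
  case 0
  show ?case using top by simp
next
  case (Suc m)
  show ?case
  proof
    assume h: "Suc m \<le> K - 1"
    define k where "k = K - m"
    have k: "2 \<le> k" "k \<le> K" using h by (auto simp: k_def)
    have km: "K - Suc m = k - 1" by (simp add: k_def)
    have ik: "integrable M (q k)" using Suc.IH h by (simp add: k_def)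
    have mk: "q (k - 1) \<in> borel_measurable M" using k by (intro meas) simp
    show "integrable M (q (K - Suc m))" unfolding km
    proof (rule Bochner_Integration.integrable_bound[OF ik mk])
      show "AE x in M. norm (q (k - 1) x) \<le> norm (q k x)"
      proof (rule AE_I2)
        fix x
        show "norm (q (k - 1) x) \<le> norm (q k x)" using nn[of "k-1" x] nn[of k x] step[OF k, of x] by simp
      qed
    qed
  qed
qed

theorem theorem2:
  fixes M :: "'a measure" and X :: "'a \<Rightarrow> nat \<Rightarrow> real"
    and K d1 :: nat and d :: "nat \<Rightarrow> nat" and bs :: "nat \<Rightarrow> nat \<Rightarrow> nat"
    and \<sigma> \<alpha> C :: real and sig :: "nat \<Rightarrow> real"
  assumes "prob_space M"
    and "K \<ge> 2" and "d1 > 0"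
    and "\<And>k. d k = 2 ^ (k - 1) * d1"
    and "\<And>k. sig k = \<sigma> / 2 ^ (k - 1)"
    and "\<sigma> > 0" and "\<alpha> > 0" and "C > 0"
    and "\<And>k. 2 \<le> k \<Longrightarrow> k \<le> K \<Longrightarrow> pair_partition (bs k) (d k) (d (k - 1))"
    and "\<And>i. i < d K \<Longrightarrow> (\<lambda>\<omega>. X \<omega> i) \<in> borel_measurable M"
    and "\<And>i. i < d K \<Longrightarrow> integrable M (\<lambda>\<omega>. (X \<omega> i)^2)"
  shows "\<alpha> * C * LA M X (d K) \<sigma> * d K
           > (\<Sum>k=1..K. \<alpha> * C * Lcasc M bs d K X sig \<sigma> k * d k)
       \<and> (\<Sum>k=1..K. d k * Lcasc M bs d K X sig \<sigma> k) < d K * LA M X (d K) \<sigma>"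
proof -
  interpret M: prob_space M by (rule assms(1))
  note dK = assms(4) and sg = assms(5)
  have dKr: "real (d k) = 2^(k-1) * real d1" for k by (simp add: dK)
  have dmono: "d k \<le> d K" if "k \<le> K" for k
  proof -
    have "(2::nat)^(k-1) \<le> 2^(K-1)" using that by (intro power_increasing) auto
    then show ?thesis by (simp add: dK)
  qed
  have lvlK: "level bs d K K y = y" for y by (simp add: level_def)
  have lvlstep: "level bs d K (k-1) y = Dop (bs k) (d k) (level bs d K k y)" if "2 \<le> k" "k \<le> K" for k y
  proof -
    have "K - (k-1) = Suc (K - k)" using that by simp
    moreover have "K - (K - k) = k" using that by simp
    ultimately show ?thesis by (simp add: level_def)
  qed
  have cmeas: "(m = 0 \<longrightarrow> i < d K) \<longrightarrow> (\<lambda>\<omega>. down bs d K m (X \<omega>) i) \<in> borel_measurable M" for m i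
    by (rule down_meas[of d K X M, OF assms(10) dmono])
  define q where "q k \<omega> = sqnorm (d k) (level bs d K k (X \<omega>))" for k \<omega>
  have qmeas: "q k \<in> borel_measurable M" if kK: "k \<le> K" for k
  proof -
    have ci: "(\<lambda>\<omega>. level bs d K k (X \<omega>) i) \<in> borel_measurable M" if "i < d k" for i
    proof -
      have "K - k = 0 \<longrightarrow> i < d K" using that kK by auto
      then have "(\<lambda>\<omega>. down bs d K (K - k) (X \<omega>) i) \<in> borel_measurable M" by (rule mp[OF cmeas[of "K - k" i]])
      then show ?thesis by (simp only: level_def)
    qed
    have "(\<lambda>\<omega>. \<Sum>i<d k. (level bs d K k (X \<omega>) i)^2) \<in> borel_measurable M"
      by (rule borel_measurable_sum, rule borel_measurable_power, rule ci) simp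
    then show ?thesis unfolding q_def sqnorm_def .
  qed
  have qnn: "q k \<omega> \<ge> 0" for k \<omega> unfolding q_def sqnorm_def by (intro sum_nonneg) auto
  have blk: "sqnorm (d k) (\<lambda>i. level bs d K k (X \<omega>) i - Uop (bs k) (Dop (bs k) (d k) (level bs d K k (X \<omega>))) i)
      = q k \<omega> - 2 * q (k-1) \<omega>" if "2 \<le> k" "k \<le> K" for k \<omega>
  proof -
    have e: "Dop (bs k) (d k) (level bs d K k (X \<omega>)) = level bs d K (k-1) (X \<omega>)"
      by (rule lvlstep[OF that, symmetric])
    show ?thesis using block_id[OF assms(9)[OF that], of "level bs d K k (X \<omega>)"] unfolding q_def e .
  qed
  have sqnn: "sqnorm n v \<ge> 0" for n v unfolding sqnorm_def by (intro sum_nonneg) auto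
  have qstep: "q (k-1) \<omega> \<le> q k \<omega>" if "2 \<le> k" "k \<le> K" for k \<omega>
  proof -
    have "0 \<le> q k \<omega> - 2 * q (k-1) \<omega>" by (subst blk[OF that, symmetric]) (rule sqnn)
    then show ?thesis using qnn[of "k-1" \<omega>] by linarith
  qed
  have qtop: "integrable M (q K)"
  proof -
    have "q K = (\<lambda>\<omega>. \<Sum>i<d K. (X \<omega> i)^2)" by (auto simp: q_def lvlK sqnorm_def)
    then show ?thesis using assms(11) by auto
  qed
  have qint0: "m \<le> K - 1 \<longrightarrow> integrable M (q (K - m))" for m
    by (rule int_down[of K q M, OF qmeas qnn qstep qtop])
  have qint: "integrable M (q k)" if "1 \<le> k" "k \<le> K" for k
    using qint0[of "K - k"] that by simp
  define E where "E k = integral\<^sup>L M (q k)" for k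
  have Enn: "E k \<ge> 0" for k unfolding E_def by (intro integral_nonneg_AE) (simp add: qnn)
  have LAe: "LA M X (d K) \<sigma> = E K + real (d K) * \<sigma>^2"
  proof -
    have "LA M X (d K) \<sigma> = (\<integral>\<omega>. q K \<omega> + real (d K) * \<sigma>^2 \<partial>M)"
      unfolding LA_def
    proof (rule Bochner_Integration.integral_cong[OF refl])
      fix \<omega>
      show "(\<integral>z. sqnorm (d K) (\<lambda>i. X \<omega> i - z i) \<partial>gauss (d K) \<sigma>) = q K \<omega> + real (d K) * \<sigma>^2"
        using gauss_int[OF assms(6), of "d K" "X \<omega>" 1] by (simp add: q_def lvlK)
    qed
    also have "\<dots> = E K + real (d K) * \<sigma>^2"
      unfolding E_def using qint[of K] assms(2) by (simp add: Bochner_Integration.integral_add M.prob_space)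
    finally show ?thesis .
  qed
  have L1e: "Lcasc M bs d K X sig \<sigma> 1 = E 1 + real d1 * \<sigma>^2"
  proof -
    have inner: "(\<integral>z. sqnorm (d 1) (\<lambda>i. level bs d K 1 (X \<omega>) i - z i) \<partial>gauss (d 1) \<sigma>) = q 1 \<omega> + real (d 1) * \<sigma>^2" for \<omega>
      using gauss_int[OF assms(6), of "d 1" "level bs d K 1 (X \<omega>)" 1] by (simp add: q_def)
    have "Lcasc M bs d K X sig \<sigma> 1 = L1 M bs d K X \<sigma>" by (simp add: Lcasc_def)
    also have "\<dots> = (\<integral>\<omega>. q 1 \<omega> + real (d 1) * \<sigma>^2 \<partial>M)"
      unfolding L1_def by (rule Bochner_Integration.integral_cong[OF refl]) (rule inner)
    also have "\<dots> = E 1 + real d1 * \<sigma>^2"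
      unfolding E_def using qint[of 1] assms(2) by (simp add: Bochner_Integration.integral_add dK M.prob_space)
    finally show ?thesis .
  qed
  have Lke: "Lcasc M bs d K X sig \<sigma> k = E k - 2 * E (k - 1) + real (d k) * (sig k)^2"
    if k: "2 \<le> k" "k \<le> K" for k
  proof -
    have inner: "(\<integral>\<zeta>. sqnorm (d k) (\<lambda>i. level bs d K k (X \<omega>) i - (Uop (bs k) (Dop (bs k) (d k) (level bs d K k (X \<omega>))) i + sig k * \<zeta> i)) \<partial>gauss (d k) 1)
         = q k \<omega> - 2 * q (k-1) \<omega> + real (d k) * (sig k)^2" for \<omega>
    proof -
      let ?y = "level bs d K k (X \<omega>)"
      let ?u = "\<lambda>i. ?y i - Uop (bs k) (Dop (bs k) (d k) ?y) i"
      have "(\<integral>\<zeta>. sqnorm (d k) (\<lambda>i. ?y i - (Uop (bs k) (Dop (bs k) (d k) ?y) i + sig k * \<zeta> i)) \<partial>gauss (d k) 1)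
         = (\<integral>\<zeta>. sqnorm (d k) (\<lambda>i. ?u i - sig k * \<zeta> i) \<partial>gauss (d k) 1)"
        by (simp add: algebra_simps)
      also have "\<dots> = sqnorm (d k) ?u + real (d k) * (sig k)^2"
        using gauss_int[of 1 "d k" ?u "sig k"] by simp
      also have "\<dots> = q k \<omega> - 2 * q (k-1) \<omega> + real (d k) * (sig k)^2"
        using blk[OF k, of \<omega>] by simp
      finally show ?thesis .
    qed
    have "Lcasc M bs d K X sig \<sigma> k = Lk M bs d K X (sig k) k" using k by (simp add: Lcasc_def)
    also have "\<dots> = (\<integral>\<omega>. q k \<omega> - 2 * q (k-1) \<omega> + real (d k) * (sig k)^2 \<partial>M)"
      unfolding Lk_def by (rule Bochner_Integration.integral_cong[OF refl]) (rule inner)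
    also have "\<dots> = E k - 2 * E (k - 1) + real (d k) * (sig k)^2"
      unfolding E_def using qint[of k] qint[of "k-1"] k
      by (simp add: Bochner_Integration.integral_add Bochner_Integration.integral_diff M.prob_space)
    finally show ?thesis .
  qed
  define D where "D = real d1"
  define l where "l k = (if k = 1 then E 1 + D * \<sigma>^2 else E k - 2 * E (k - 1) + (2^(k-1) * D) * (\<sigma> / 2^(k-1))^2)" for k
  have lc: "Lcasc M bs d K X sig \<sigma> k = l k" if "1 \<le> k" "k \<le> K" for k
  proof (cases "k = 1")
    case True then show ?thesis using L1e by (simp add: l_def D_def)
  next
    case False
    then show ?thesis using Lke[of k] that by (simp add: l_def D_def dKr sg)
  qed
  have main: "(\<Sum>k=1..K. (2^(k-1) * D) * l k) < 2^(K-1) * D * (E K + 2^(K-1) * D * \<sigma>^2)"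
    by (rule arith_final) (use assms(2,3,6) Enn in \<open>auto simp: l_def D_def\<close>)
  have S: "(\<Sum>k=1..K. real (d k) * Lcasc M bs d K X sig \<sigma> k) = (\<Sum>k=1..K. (2^(k-1) * D) * l k)"
    by (rule sum.cong[OF refl]) (auto simp: lc dKr D_def)
  have R: "real (d K) * LA M X (d K) \<sigma> = 2^(K-1) * D * (E K + 2^(K-1) * D * \<sigma>^2)"
    by (simp add: LAe dKr D_def)
  have second: "(\<Sum>k=1..K. real (d k) * Lcasc M bs d K X sig \<sigma> k) < real (d K) * LA M X (d K) \<sigma>"
    using main S R by simp
  have "(\<Sum>k=1..K. \<alpha> * C * Lcasc M bs d K X sig \<sigma> k * real (d k))
      = (\<alpha> * C) * (\<Sum>k=1..K. real (d k) * Lcasc M bs d K X sig \<sigma> k)"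
    by (simp add: sum_distrib_left algebra_simps)
  also have "\<dots> < (\<alpha> * C) * (real (d K) * LA M X (d K) \<sigma>)"
    using second assms(7,8) by (intro mult_strict_left_mono) auto
  finally have first: "(\<Sum>k=1..K. \<alpha> * C * Lcasc M bs d K X sig \<sigma> k * real (d k)) < \<alpha> * C * LA M X (d K) \<sigma> * real (d K)"
    by (simp add: algebra_simps)
  show ?thesis using first second by simp
qed

end
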